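(* Let $A\ne0$ be a real symmetric weighted adjacency matrix of a finite simple graph on $n$ vertices, and let $y\in\mathbb R$ satisfy $W_A(y)=\min\{W_A(x):\lambda_{\min}(A)^{-1}\le x\le\lambda_{\max}(A)^{-1}\}$. Then there exists $\boldsymbol u\in\mathbb R^n$ with $$|\boldsymbol u|^2=W_A(y),\qquad\langle\boldsymbol u,A\boldsymbol u\rangle=0,\qquad|\boldsymbol u|^2=\langle\boldsymbol 1,\boldsymbol u\rangle.$$
   Context: A weighted adjacency matrix is a real symmetric $A$ with $A_{ii}=0$ and $A_{ij}=0$ for non-adjacent $i\ne j$. $\boldsymbol 1$ is the all-ones vector. $W_A(x)=\sum_{\lambda\in\sigma(A)}\frac{\langle\boldsymbol 1,P_\lambda\boldsymbol 1\rangle}{1-\lambda x}$ with $P_\lambda$ the orthogonal eigenprojections of $A$, terms with $\langle\boldsymbol 1,P_\lambda\boldsymbol 1\rangle=0$ omitted, and value $+\infty$ at a pole. *)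

theory Defs
  imports "HOL-Analysis.Analysis"
begin

definition weighted_adjacency :: "('n::finite \<Rightarrow> 'n \<Rightarrow> bool) \<Rightarrow> real^'n^'n \<Rightarrow> bool" where
  "weighted_adjacency E A \<longleftrightarrow>
     (\<forall>i j. E i j \<longrightarrow> E j i) \<and> (\<forall>i. \<not> E i i) \<and>
     transpose A = A \<and> (\<forall>i. A $ i $ i = 0) \<and>
     (\<forall>i j. i \<noteq> j \<and> \<not> E i j \<longrightarrow> A $ i $ j = 0)"

definition spec :: "real^'n^'n \<Rightarrow> real set" where
  "spec A = {l. \<exists>v. v \<noteq> 0 \<and> A *v v = l *\<^sub>R v}"

definition eigenspace :: "real^'n^'n \<Rightarrow> real \<Rightarrow> (real^'n) set" where
  "eigenspace A l = {v. A *v v = l *\<^sub>R v}"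

definition orth_proj :: "(real^'n) set \<Rightarrow> real^'n \<Rightarrow> real^'n" where
  "orth_proj S x = (THE p. p \<in> S \<and> (\<forall>w\<in>S. (x - p) \<bullet> w = 0))"

definition spec_weight :: "real^'n^'n \<Rightarrow> real \<Rightarrow> real" where
  "spec_weight A l = vec 1 \<bullet> orth_proj (eigenspace A l) (vec 1)"

definition W :: "real^'n^'n \<Rightarrow> real \<Rightarrow> ereal" where
  "W A x = (let L = {l \<in> spec A. spec_weight A l \<noteq> 0} in
     if \<exists>l\<in>L. 1 - l * x = 0 then \<infinity>
     else ereal (\<Sum>l\<in>L. spec_weight A l / (1 - l * x)))"

definition lambda_min :: "real^'n^'n \<Rightarrow> real" where
  "lambda_min A = Min (spec A)"

definition lambda_max :: "real^'n^'n \<Rightarrow> real" where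
  "lambda_max A = Max (spec A)"

end

theory Submission
  imports Defs
begin


lemma mv_add: "A *v (x + y) = A *v x + A *v (y::real^'n)"
  using linear_add[OF matrix_vector_mul_linear] by blast
lemma mv_scale: "A *v (c *\<^sub>R x) = c *\<^sub>R (A *v (x::real^'n))"
  using linear_scale[OF matrix_vector_mul_linear] by blast
lemma mv_diff: "A *v (x - y) = A *v x - A *v (y::real^'n)"
  using linear_diff[OF matrix_vector_mul_linear] by blast
lemma mv_sum: "A *v (\<Sum>i\<in>I. f i) = (\<Sum>i\<in>I. A *v (f i::real^'n))"
  using linear_sum[OF matrix_vector_mul_linear] by blast

lemma sym_inner:
  fixes A :: "real^'n^'n"
  assumes "transpose A = A"
  shows "(A *v x) \<bullet> y = x \<bullet> (A *v y)"
proof -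
  have "A *v x = transpose A *v x" using assms by simp
  also have "\<dots> = x v* A" by simp
  finally show ?thesis by (simp add: dot_lmul_matrix)
qed

lemma quad_zero:
  fixes a c :: real
  assumes "\<forall>t. 2 * t * a + t^2 * c \<le> 0" and "a \<ge> 0"
  shows "a = 0"
proof (rule ccontr)
  assume "a \<noteq> 0"
  then have a: "a > 0" using assms(2) by simp
  define t where "t = a / (\<bar>c\<bar> + 1)"
  have t: "t > 0" using a by (simp add: t_def)
  have "2 * t * a + t^2 * c = t * (2 * a + t * c)" by (simp add: power2_eq_square algebra_simps)
  moreover have "t * c \<ge> - a"
  proof -
    have "t * \<bar>c\<bar> \<le> a" unfolding t_def using a by (simp add: field_simps)
    moreover have "t * c \<ge> - (t * \<bar>c\<bar>)"
    proof -
      have "-\<bar>c\<bar> \<le> c" by simp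
      then have "t * (-\<bar>c\<bar>) \<le> t * c" using mult_left_mono[of "-\<bar>c\<bar>" c t] t by simp
      then show ?thesis by simp
    qed
    ultimately show ?thesis by linarith
  qed
  moreover have "t * (2 * a + t * c) \<ge> t * a"
  proof -
    have "2 * a + t * c \<ge> a" using calculation(2) by linarith
    then show ?thesis by (rule mult_left_mono) (use t in simp)
  qed
  ultimately have "2 * t * a + t^2 * c \<ge> t * a" by linarith
  moreover have "t * a > 0" using t a by simp
  ultimately have "2 * t * a + t^2 * c > 0" by linarith
  then show False using assms(1) by (meson not_le)
qed

lemma max_eig:
  fixes A :: "real^'n^'n"
  assumes sym: "transpose A = A"
  shows "\<exists>v M. v \<noteq> 0 \<and> A *v v = M *\<^sub>R v \<and> (\<forall>x. x \<bullet> (A *v x) \<le> M * (norm x)^2)"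
proof -
  let ?q = "\<lambda>x::real^'n. x \<bullet> (A *v x)"
  have cont: "continuous_on (sphere 0 1) ?q"
    by (intro continuous_intros linear_continuous_on matrix_vector_mul_linear[folded linear_linear])
  have ne: "sphere (0::real^'n) 1 \<noteq> {}"
  proof -
    have "axis (undefined::'n) (1::real) \<in> sphere 0 1" by simp
    then show ?thesis by blast
  qed
  obtain v where v: "v \<in> sphere 0 1" and vmax: "\<forall>x\<in>sphere 0 1. ?q x \<le> ?q v"
    using continuous_attains_sup[OF compact_sphere ne cont] by blast
  define M where "M = ?q v"
  have nv: "norm v = 1" using v by simp
  have hom: "?q x \<le> M * (norm x)^2" for x
  proof (cases "x = 0")
    case True then show ?thesis by simp
  next
    case False
    let ?y = "inverse (norm x) *\<^sub>R x"
    have "?y \<in> sphere 0 1" using False by simp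
    then have "?q ?y \<le> M" using vmax M_def by blast
    moreover have "?q ?y = (inverse (norm x))^2 * ?q x"
      by (simp add: mv_scale power2_eq_square)
    ultimately have "(inverse (norm x))^2 * ?q x \<le> M" by simp
    then have "(norm x)^2 * ((inverse (norm x))^2 * ?q x) \<le> (norm x)^2 * M"
      by (simp add: mult_left_mono)
    then show ?thesis using False by (simp add: field_simps)
  qed
  define r where "r = A *v v - M *\<^sub>R v"
  define c where "c = ?q r - M * (norm r)^2"
  have key: "2 * t * (norm r)^2 + t^2 * c \<le> 0" for t
  proof -
    have h: "?q (v + t *\<^sub>R r) \<le> M * (norm (v + t *\<^sub>R r))^2" by (rule hom)
    have e1: "?q (v + t *\<^sub>R r) = ?q v + 2 * t * (r \<bullet> (A *v v)) + t^2 * ?q r"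
    proof -
      have s: "v \<bullet> (A *v r) = r \<bullet> (A *v v)"
        using sym_inner[OF sym, of v r] by (simp add: inner_commute)
      show ?thesis
        by (simp add: mv_add mv_scale inner_add_left inner_add_right s power2_eq_square algebra_simps)
    qed
    have e2: "(norm (v + t *\<^sub>R r))^2 = 1 + 2 * t * (v \<bullet> r) + t^2 * (norm r)^2"
    proof -
      have vv: "v \<bullet> v = 1" by (metis nv power2_norm_eq_inner power_one)
      have "(norm (v + t *\<^sub>R r))^2 = v \<bullet> v + 2 * t * (v \<bullet> r) + t^2 * (r \<bullet> r)"
        unfolding power2_norm_eq_inner
        by (simp add: inner_add_left inner_add_right inner_commute power2_eq_square algebra_simps)
      then show ?thesis using vv by (simp add: power2_norm_eq_inner)
    qed
    have e3: "r \<bullet> (A *v v) - M * (v \<bullet> r) = (norm r)^2"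
      by (simp add: r_def power2_norm_eq_inner inner_diff_left inner_diff_right inner_commute algebra_simps)
    from h e1 e2 have "M + 2 * t * (r \<bullet> (A *v v)) + t^2 * ?q r \<le> M * (1 + 2 * t * (v \<bullet> r) + t^2 * (norm r)^2)"
      using M_def by simp
    then have "2 * t * (r \<bullet> (A *v v) - M * (v \<bullet> r)) + t^2 * c \<le> 0"
      unfolding c_def by (simp add: algebra_simps)
    then show ?thesis using e3 by simp
  qed
  have "(norm r)^2 = 0" by (rule quad_zero) (use key in auto)
  then have "A *v v = M *\<^sub>R v" using r_def by simp
  moreover have "v \<noteq> 0" using nv by auto
  ultimately show ?thesis using hom by blast
qed



lemma neg_mv: "(- A) *v x = - (A *v (x::real^'n))"
  by (simp add: matrix_vector_mult_def vec_eq_iff sum_negf)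

lemma transpose_neg': "transpose (- A) = - transpose (A::real^'n^'n)"
  by (simp add: transpose_def vec_eq_iff)

lemma eig_orth:
  fixes A :: "real^'n^'n"
  assumes "transpose A = A" "A *v v = l *\<^sub>R v" "A *v w = k *\<^sub>R w" "l \<noteq> k"
  shows "v \<bullet> w = 0"
proof -
  have "l * (v \<bullet> w) = (A *v v) \<bullet> w" using assms(2) by simp
  also have "\<dots> = v \<bullet> (A *v w)" by (rule sym_inner[OF assms(1)])
  also have "\<dots> = k * (v \<bullet> w)" using assms(3) by simp
  finally show ?thesis using assms(4) by simp
qed

lemma spec_finite:
  fixes A :: "real^'n^'n"
  assumes sym: "transpose A = A"
  shows "finite (spec A)"
proof (rule ccontr)
  assume "infinite (spec A)"
  then obtain F where F: "F \<subseteq> spec A" "finite F" "card F = Suc CARD('n)"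
    using infinite_arbitrarily_large by blast
  define e where "e = (\<lambda>l. SOME v. v \<noteq> 0 \<and> A *v v = l *\<^sub>R v)"
  have e: "e l \<noteq> 0 \<and> A *v e l = l *\<^sub>R e l" if "l \<in> spec A" for l
    using that unfolding spec_def e_def by (rule CollectE) (rule someI_ex)
  have inj: "inj_on e F"
  proof (rule inj_onI)
    fix l k assume lk: "l \<in> F" "k \<in> F" "e l = e k"
    then have "l *\<^sub>R e l = k *\<^sub>R e l" using e F(1) by (metis subsetD)
    then show "l = k" using e lk F(1) by (meson scaleR_cancel_right subsetD)
  qed
  have po: "pairwise orthogonal (e ` F)"
    unfolding pairwise_def orthogonal_def
  proof (clarify)
    fix l k assume lk: "l \<in> F" "k \<in> F" "e l \<noteq> e k"
    then have "l \<noteq> k" by auto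
    then show "e l \<bullet> e k = 0" using eig_orth[OF sym] e lk F(1) by (meson subsetD)
  qed
  have "0 \<notin> e ` F" using e F(1) by auto
  then have "independent (e ` F)" using pairwise_orthogonal_independent po by blast
  then have "card (e ` F) \<le> DIM(real^'n)" using independent_bound by blast
  then have "card F \<le> CARD('n)" using card_image[OF inj] by simp
  then show False using F(3) by simp
qed

lemma quad_bounds:
  fixes A :: "real^'n^'n"
  assumes sym: "transpose A = A"
  shows "spec A \<noteq> {}" "\<forall>x. x \<bullet> (A *v x) \<le> Max (spec A) * (norm x)^2"
    "\<forall>x. x \<bullet> (A *v x) \<ge> Min (spec A) * (norm x)^2"
proof -
  have fin: "finite (spec A)" by (rule spec_finite[OF sym])
  obtain v M where vM: "v \<noteq> 0" "A *v v = M *\<^sub>R v" "\<forall>x. x \<bullet> (A *v x) \<le> M * (norm x)^2"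
    using max_eig[OF sym] by blast
  have M: "M \<in> spec A" using vM unfolding spec_def by blast
  then show "spec A \<noteq> {}" by blast
  have "M \<le> Max (spec A)" using M fin by simp
  then show "\<forall>x. x \<bullet> (A *v x) \<le> Max (spec A) * (norm x)^2" using vM(3)
    by (meson mult_right_mono order_trans zero_le_power2)
  obtain v' M' where vM': "v' \<noteq> 0" "(-A) *v v' = M' *\<^sub>R v'" "\<forall>x. x \<bullet> ((-A) *v x) \<le> M' * (norm x)^2"
    using max_eig[of "-A"] sym transpose_neg' by metis
  have "A *v v' = (-M') *\<^sub>R v'" using vM'(2) neg_mv by (metis minus_minus scaleR_minus_left)
  then have M': "-M' \<in> spec A" using vM' unfolding spec_def by blast
  have "Min (spec A) \<le> -M'" using M' fin by simp
  moreover have "x \<bullet> (A *v x) \<ge> -M' * (norm x)^2" for x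
  proof -
    have "x \<bullet> ((-A) *v x) \<le> M' * (norm x)^2" using vM'(3) by blast
    then show ?thesis using neg_mv[of A x] by simp
  qed
  ultimately show "\<forall>x. x \<bullet> (A *v x) \<ge> Min (spec A) * (norm x)^2"
    by (meson mult_right_mono order_trans zero_le_power2)
qed

lemma eigenspace_subspace: "subspace (eigenspace A l)"
  unfolding subspace_def eigenspace_def by (auto simp: mv_add mv_scale algebra_simps)

lemma orth_proj_props:
  fixes S :: "(real^'n) set"
  assumes "subspace S"
  shows "orth_proj S x \<in> S \<and> (\<forall>w\<in>S. (x - orth_proj S x) \<bullet> w = 0)"
proof -
  obtain y z where yz: "y \<in> span S" "\<And>w. w \<in> span S \<Longrightarrow> orthogonal z w" "x = y + z"
    using orthogonal_subspace_decomp_exists by blast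
  have sp: "span S = S" using assms by (simp add: span_eq_iff)
  have ex: "y \<in> S \<and> (\<forall>w\<in>S. (x - y) \<bullet> w = 0)" using yz sp by (auto simp: orthogonal_def)
  have uniq: "p = y" if "p \<in> S \<and> (\<forall>w\<in>S. (x - p) \<bullet> w = 0)" for p
  proof -
    have d: "p - y \<in> S" using that ex assms by (simp add: subspace_diff)
    have "(x - y) \<bullet> (p - y) - (x - p) \<bullet> (p - y) = 0" using that ex d by simp
    then have "(p - y) \<bullet> (p - y) = 0" by (simp add: inner_diff_left inner_diff_right inner_commute algebra_simps)
    then show ?thesis by simp
  qed
  show ?thesis unfolding orth_proj_def
    by (rule theI[of _ y]) (use ex uniq in blast)+
qed

lemma zero_matrix:
  fixes A :: "real^'n^'n"
  assumes sym: "transpose A = A" and diag: "\<forall>i. A $ i $ i = 0"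
    and q: "\<forall>x. x \<bullet> (A *v x) \<le> 0"
  shows "A = 0"
proof -
  have "A $ i $ j = 0" for i j
  proof (cases "i = j")
    case True then show ?thesis using diag by simp
  next
    case False
    have aij: "A $ j $ i = A $ i $ j" using sym by (metis transpose_def vec_lambda_beta)
    have ent: "axis a 1 \<bullet> (A *v axis b 1) = A $ a $ b" for a b
      by (simp add: inner_axis' matrix_vector_mul_component inner_axis)
    let ?x = "axis i 1 + (A $ i $ j) *\<^sub>R axis j (1::real)"
    have "?x \<bullet> (A *v ?x) = 2 * (A $ i $ j)^2"
      by (simp add: mv_add mv_scale inner_add_left inner_add_right ent aij diag power2_eq_square)
    then show ?thesis using q by (metis mult_le_0_iff power2_eq_square zero_le_square not_numeral_le_zero order_antisym_conv zero_le_numeral power_eq_0_iff)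
  qed
  then show ?thesis by (simp add: vec_eq_iff)
qed



lemma interp_left:
  fixes a x0 h l :: real
  assumes "a < x0" "0 < h" "h < x0 - a" "0 \<le> 1 - l*a" "0 < 1 - l*x0"
  shows "0 < 1 - l*(x0-h)"
proof -
  have eq: "(x0 - a) * (1 - l*(x0-h)) = h*(1 - l*a) + (x0 - a - h)*(1 - l*x0)"
    by (simp add: algebra_simps)
  have "0 < h*(1 - l*a) + (x0 - a - h)*(1 - l*x0)"
    using assms by (intro add_nonneg_pos mult_nonneg_nonneg mult_pos_pos) auto
  then have "0 < (x0 - a) * (1 - l*(x0-h))" using eq by simp
  then show ?thesis using assms(1) by (simp add: zero_less_mult_iff)
qed

lemma interp_right:
  fixes b x0 h l :: real
  assumes "x0 < b" "0 < h" "h < b - x0" "0 \<le> 1 - l*b" "0 < 1 - l*x0"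
  shows "0 < 1 - l*(x0+h)"
proof -
  have eq: "(b - x0) * (1 - l*(x0+h)) = h*(1 - l*b) + (b - x0 - h)*(1 - l*x0)"
    by (simp add: algebra_simps)
  have "0 < h*(1 - l*b) + (b - x0 - h)*(1 - l*x0)"
    using assms by (intro add_nonneg_pos mult_nonneg_nonneg mult_pos_pos) auto
  then have "0 < (b - x0) * (1 - l*(x0+h))" using eq by simp
  then show ?thesis using assms(1) by (simp add: zero_less_mult_iff)
qed

lemma lx_le_1:
  fixes lmin lmax l x :: real
  assumes "lmin < 0" "0 < lmax" "lmin \<le> l" "l \<le> lmax" "inverse lmin \<le> x" "x \<le> inverse lmax"
  shows "0 \<le> 1 - l*x"
proof (cases "0 \<le> x")
  case True
  have "l*x \<le> lmax*x" using assms(4) True by (rule mult_right_mono)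
  also have "\<dots> \<le> lmax * inverse lmax" using mult_left_mono[OF assms(6), of lmax] assms(2) by linarith
  also have "\<dots> = 1" using assms(2) by simp
  finally show ?thesis by simp
next
  case False
  have "l*x \<le> lmin*x" using assms(3) False by (simp add: mult_right_mono_neg)
  also have "\<dots> \<le> lmin * inverse lmin" using mult_left_mono_neg[OF assms(5), of lmin] assms(1) by linarith
  also have "\<dots> = 1" using assms(1) by simp
  finally show ?thesis by simp
qed

lemma deriv_term:
  fixes w l x0 :: real
  assumes "1 - l*x0 \<noteq> 0"
  shows "((\<lambda>x. w / (1 - l*x)) has_field_derivative (w * l / (1 - l*x0)^2)) (at x0)"
  using assms by (auto intro!: derivative_eq_intros simp: field_simps power2_eq_square)

lemma term_id:
  fixes d x l w :: real
  assumes "d \<noteq> 0" "d + x*l = 1"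
  shows "(1/d) * ((1/d) * w) = w/d + x*(w*l/d^2)"
proof -
  have "w/d + x*(w*l/d^2) = (w*d + x*w*l)/d^2" using assms(1) by (simp add: field_simps power2_eq_square)
  also have "w*d + x*w*l = w*(d + x*l)" by (simp add: algebra_simps)
  also have "\<dots> = w" using assms(2) by simp
  finally show ?thesis by (simp add: power2_eq_square)
qed



theorem proposition7:
  fixes E :: "'n::finite \<Rightarrow> 'n \<Rightarrow> bool" and A :: "real^'n^'n" and y :: real
  assumes "weighted_adjacency E A"
    and "A \<noteq> 0"
    and "W A y \<in> W A ` {inverse (lambda_min A) .. inverse (lambda_max A)}"
    and "\<forall>x \<in> {inverse (lambda_min A) .. inverse (lambda_max A)}. W A y \<le> W A x"
  shows "\<exists>u :: real^'n. ereal ((norm u)\<^sup>2) = W A y \<and> u \<bullet> (A *v u) = 0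
           \<and> (norm u)\<^sup>2 = vec 1 \<bullet> u"
proof -
  from assms(1) have sym: "transpose A = A" and diag: "\<forall>i. A $ i $ i = 0"
    unfolding weighted_adjacency_def by auto
  have fin: "finite (spec A)" by (rule spec_finite[OF sym])
  note qb = quad_bounds[OF sym]
  define lmin where "lmin = lambda_min A"
  define lmax where "lmax = lambda_max A"
  have lmin_in: "lmin \<in> spec A" using fin qb(1) by (simp add: lmin_def lambda_min_def)
  have lmax_in: "lmax \<in> spec A" using fin qb(1) by (simp add: lmax_def lambda_max_def)
  have le_l: "lmin \<le> l \<and> l \<le> lmax" if "l \<in> spec A" for l
    using fin that by (simp add: lmin_def lambda_min_def lmax_def lambda_max_def)
  have lmax_pos: "0 < lmax"
  proof (rule ccontr)
    assume "\<not> 0 < lmax"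
    then have "\<forall>x. x \<bullet> (A *v x) \<le> 0" using qb(2) unfolding lmax_def lambda_max_def
      by (meson mult_nonpos_nonneg not_less order_trans zero_le_power2)
    then have "A = 0" using zero_matrix sym diag by blast
    with assms(2) show False by simp
  qed
  have lmin_neg: "lmin < 0"
  proof (rule ccontr)
    assume "\<not> lmin < 0"
    then have h: "\<forall>x. 0 \<le> x \<bullet> (A *v x)" using qb(3) unfolding lmin_def lambda_min_def
      by (meson mult_nonneg_nonneg not_less order_trans zero_le_power2)
    have "\<forall>x. x \<bullet> ((-A) *v x) \<le> 0" using h by (simp add: neg_mv)
    moreover have "transpose (-A) = -A" using sym transpose_neg' by metis
    moreover have "\<forall>i. (-A) $ i $ i = 0" using diag by simp
    ultimately have "-A = 0" using zero_matrix by blast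
    with assms(2) show False by simp
  qed
  define a where "a = inverse lmin"
  define b where "b = inverse lmax"
  have a_neg: "a < 0" using lmin_neg by (simp add: a_def)
  have b_pos: "0 < b" using lmax_pos by (simp add: b_def)
  have nonneg: "0 \<le> 1 - l*x" if "x \<in> {a..b}" "l \<in> spec A" for x l
    using lx_le_1[OF lmin_neg lmax_pos] le_l[OF that(2)] that(1) by (simp add: a_def b_def)
  define wt where "wt = spec_weight A"
  define L where "L = {l \<in> spec A. wt l \<noteq> 0}"
  have finL: "finite L" using fin by (simp add: L_def)
  define f where "f = (\<lambda>x. \<Sum>l\<in>L. wt l / (1 - l*x))"
  have Wf: "W A x = ereal (f x)" if "\<forall>l\<in>L. 1 - l*x \<noteq> 0" for x
    using that unfolding W_def Let_def L_def f_def wt_def by auto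
  have Winf: "W A x = \<infinity>" if "\<exists>l\<in>L. 1 - l*x = 0" for x
    using that unfolding W_def Let_def L_def wt_def by auto
  have I: "{inverse (lambda_min A) .. inverse (lambda_max A)} = {a..b}"
    by (simp add: a_def b_def lmin_def lmax_def)
  have "0 \<in> {a..b}" using a_neg b_pos by simp
  then have "W A y \<le> W A 0" using assms(4) I by blast
  moreover have "W A 0 = ereal (f 0)" by (rule Wf) simp
  ultimately have Wy0: "W A y \<le> ereal (f 0)" by simp
  obtain x0 where x0: "x0 \<in> {a..b}" "W A x0 = W A y" using assms(3) I by auto
  have nopole: "\<forall>l\<in>L. 1 - l*x0 \<noteq> 0"
  proof (rule ccontr)
    assume "\<not> (\<forall>l\<in>L. 1 - l*x0 \<noteq> 0)"
    then have "W A x0 = \<infinity>" using Winf by blast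
    then show False using Wy0 x0(2) by simp
  qed
  have pos: "\<forall>l\<in>L. 0 < 1 - l*x0"
    using nopole nonneg[OF x0(1)] unfolding L_def by force
  define m where "m = f x0"
  have Wy: "W A y = ereal m" using Wf[OF nopole] x0(2) m_def by simp
  have fmin: "m \<le> f x" if "x \<in> {a..b}" "\<forall>l\<in>L. 1 - l*x \<noteq> 0" for x
  proof -
    have "W A y \<le> W A x" using assms(4) I that(1) by blast
    then show ?thesis using Wy Wf[OF that(2)] by simp
  qed
  define F where "F = (\<Sum>l\<in>L. wt l * l / (1 - l*x0)^2)"
  have deriv: "(f has_field_derivative F) (at x0)"
    unfolding f_def F_def
    by (rule DERIV_sum) (use deriv_term nopole in blast)

  define one where "one = (vec 1 :: real^'n)"
  define p where "p = (\<lambda>l. orth_proj (eigenspace A l) one)"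
  have pprops: "p l \<in> eigenspace A l \<and> (\<forall>w\<in>eigenspace A l. (one - p l) \<bullet> w = 0)" for l
    unfolding p_def by (rule orth_proj_props[OF eigenspace_subspace])
  have pE: "A *v p l = l *\<^sub>R p l" for l using pprops[of l] by (simp add: eigenspace_def)
  have pperp: "(one - p l) \<bullet> w = 0" if "A *v w = l *\<^sub>R w" for l w
    using pprops[of l] that by (simp add: eigenspace_def)
  have wt1: "wt l = one \<bullet> p l" for l by (simp add: wt_def spec_weight_def p_def one_def)
  have wt2: "wt l = p l \<bullet> p l" for l
    using pperp[OF pE[of l]] wt1[of l] by (simp add: inner_diff_left)
  have porth: "p l \<bullet> p k = 0" if "l \<noteq> k" for l k
    by (rule eig_orth[OF sym pE pE that])
  define c where "c = (\<lambda>l. 1 / (1 - l*x0))"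
  define u0 where "u0 = (\<Sum>l\<in>L. c l *\<^sub>R p l)"
  have pu0: "p l \<bullet> u0 = c l * wt l" if "l \<in> L" for l
  proof -
    have "p l \<bullet> u0 = (\<Sum>k\<in>L. c k * (p l \<bullet> p k))"
      by (simp add: u0_def inner_sum_right)
    also have "\<dots> = (\<Sum>k\<in>L. if k = l then c l * wt l else 0)"
      by (rule sum.cong) (auto simp: porth wt2)
    also have "\<dots> = c l * wt l" using that finL by simp
    finally show ?thesis .
  qed
  have one_u0: "one \<bullet> u0 = m"
    by (simp add: u0_def inner_sum_right m_def f_def wt1 c_def)
  have Au0: "A *v u0 = (\<Sum>l\<in>L. (c l * l) *\<^sub>R p l)"
    by (simp add: u0_def mv_sum mv_scale pE)
  have nu0: "u0 \<bullet> u0 = (\<Sum>l\<in>L. c l * (c l * wt l))"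
  proof -
    have "u0 \<bullet> u0 = (\<Sum>l\<in>L. c l * (p l \<bullet> u0))"
      by (simp add: u0_def[of] inner_sum_left)
    also have "\<dots> = (\<Sum>l\<in>L. c l * (c l * wt l))"
      by (rule sum.cong) (auto simp: pu0)
    finally show ?thesis .
  qed
  have qu0: "u0 \<bullet> (A *v u0) = F"
  proof -
    have "u0 \<bullet> (A *v u0) = (A *v u0) \<bullet> u0" by (simp add: inner_commute)
    also have "\<dots> = (\<Sum>l\<in>L. (c l * l) * (p l \<bullet> u0))"
      by (simp add: Au0 inner_sum_left)
    also have "\<dots> = F"
      unfolding F_def by (rule sum.cong) (auto simp: pu0 c_def power2_eq_square)
    finally show ?thesis .
  qed
  have DmF: "u0 \<bullet> u0 = m + x0 * F"
  proof -
    have "u0 \<bullet> u0 = (\<Sum>l\<in>L. wt l / (1 - l*x0) + x0 * (wt l * l / (1 - l*x0)^2))"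
      unfolding nu0
    proof (rule sum.cong)
      fix l assume "l \<in> L"
      then have d: "1 - l*x0 \<noteq> 0" using nopole by blast
      show "c l * (c l * wt l) = wt l / (1 - l*x0) + x0 * (wt l * l / (1 - l*x0)^2)"
        unfolding c_def by (rule term_id[OF d]) (simp add: algebra_simps)
    qed simp
    also have "\<dots> = m + x0 * F"
      by (simp add: sum.distrib m_def f_def F_def sum_distrib_left)
    finally show ?thesis .
  qed
  have ext: "\<exists>u :: real^'n. ereal ((norm u)\<^sup>2) = W A y \<and> u \<bullet> (A *v u) = 0
           \<and> (norm u)\<^sup>2 = vec 1 \<bullet> u"
    if mu: "\<mu> \<in> spec A" "wt \<mu> = 0" "\<mu> * x0 = 1" "F / \<mu> \<le> 0" for \<mu>
  proof -
    have mu0: "\<mu> \<noteq> 0" using mu(3) by auto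
    have x0mu: "x0 = 1 / \<mu>" using mu(3) mu0 by (simp add: field_simps)
    obtain v0 where v0: "v0 \<noteq> 0" "A *v v0 = \<mu> *\<^sub>R v0" using mu(1) unfolding spec_def by blast
    define v where "v = inverse (norm v0) *\<^sub>R v0"
    have vv: "v \<bullet> v = 1" using v0(1) by (simp add: v_def power2_norm_eq_inner[symmetric] power2_eq_square)
    have Av: "A *v v = \<mu> *\<^sub>R v" using v0(2) by (simp add: v_def mv_scale)
    have pmu: "p \<mu> = 0" using wt2[of \<mu>] mu(2) by simp
    have onev: "one \<bullet> v = 0" using pperp[OF Av] pmu by simp
    have vp: "v \<bullet> p l = 0" if "l \<in> L" for l
    proof -
      have "l \<noteq> \<mu>" using that mu(2) L_def by auto
      then show ?thesis using eig_orth[OF sym Av pE] by auto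
    qed
    have vu0: "v \<bullet> u0 = 0" by (simp add: u0_def inner_sum_right vp)
    have vAu0: "v \<bullet> (A *v u0) = 0"
      using sym_inner[OF sym, of v u0] Av vu0 by simp
    have u0Av: "u0 \<bullet> (A *v v) = 0" using Av vu0 by (simp add: inner_commute)
    define t where "t = sqrt (- F / \<mu>)"
    have t2: "t * t = - F / \<mu>" 
    proof -
      have "0 \<le> - F / \<mu>" using mu(4) by simp
      then show ?thesis unfolding t_def by (simp only: real_sqrt_mult_self abs_of_nonneg)
    qed
    define u where "u = u0 + t *\<^sub>R v"
    have uu: "u \<bullet> u = m"
    proof -
      have "u \<bullet> u = u0 \<bullet> u0 + 2 * t * (v \<bullet> u0) + t * t * (v \<bullet> v)"
        by (simp add: u_def inner_add_left inner_add_right inner_commute algebra_simps)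
      also have "\<dots> = m + x0 * F - F / \<mu>" using DmF vu0 vv t2 by simp
      also have "\<dots> = m" using x0mu by simp
      finally show ?thesis .
    qed
    have qu: "u \<bullet> (A *v u) = 0"
    proof -
      have "u \<bullet> (A *v u) = u0 \<bullet> (A *v u0) + t * (u0 \<bullet> (A *v v)) + t * (v \<bullet> (A *v u0)) + t * t * (v \<bullet> (A *v v))"
        by (simp add: u_def mv_add mv_scale inner_add_left inner_add_right algebra_simps)
      also have "\<dots> = F + t * t * \<mu>" using qu0 u0Av vAu0 Av vv by simp
      also have "\<dots> = 0" using t2 mu0 by simp
      finally show ?thesis .
    qed
    have oneu: "one \<bullet> u = m" by (simp add: u_def inner_add_right one_u0 onev)
    show ?thesis
      by (rule exI[of _ u]) (simp add: power2_norm_eq_inner uu qu Wy oneu[unfolded one_def, simplified])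
  qed
  consider "F = 0" | "F > 0" | "F < 0" by linarith
  then show ?thesis
  proof cases
    case 1
    show ?thesis
      by (rule exI[of _ u0]) (simp add: power2_norm_eq_inner DmF 1 qu0 Wy one_u0[unfolded one_def, simplified])
  next
    case 2
    have "x0 = a"
    proof (rule ccontr)
      assume "x0 \<noteq> a"
      then have ax: "a < x0" using x0(1) by simp
      obtain d where d: "d > 0" "\<forall>h>0. h < d \<longrightarrow> f (x0 - h) < f x0"
        using DERIV_pos_inc_left[OF deriv 2] by blast
      define h where "h = min (d/2) ((x0 - a)/2)"
      have h: "0 < h" "h < d" "h < x0 - a" using d(1) ax unfolding h_def by (simp_all add: min_def)
      have xin: "x0 - h \<in> {a..b}" using h x0(1) by auto
      have np: "\<forall>l\<in>L. 1 - l*(x0-h) \<noteq> 0"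
      proof
        fix l assume l: "l \<in> L"
        have "0 \<le> 1 - l*a" using nonneg[of a l] l a_neg b_pos unfolding L_def by auto
        then have "0 < 1 - l*(x0-h)" using interp_left[OF ax h(1) h(3)] pos l by blast
        then show "1 - l*(x0-h) \<noteq> 0" by simp
      qed
      have "f (x0 - h) < m" using d(2) h m_def by blast
      moreover have "m \<le> f (x0 - h)" using fmin[OF xin np] .
      ultimately show False by simp
    qed
    have wmin: "wt lmin = 0"
    proof (rule ccontr)
      assume "wt lmin \<noteq> 0"
      then have "lmin \<in> L" using lmin_in L_def by simp
      moreover have "1 - lmin * x0 = 0" using \<open>x0 = a\<close> lmin_neg by (simp add: a_def)
      ultimately show False using nopole by blast
    qed
    show ?thesis
    proof (rule ext[OF lmin_in wmin])
      show "lmin * x0 = 1" using \<open>x0 = a\<close> lmin_neg by (simp add: a_def)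
      show "F / lmin \<le> 0" using 2 lmin_neg by (simp add: divide_pos_neg less_imp_le)
    qed
  next
    case 3
    have "x0 = b"
    proof (rule ccontr)
      assume "x0 \<noteq> b"
      then have bx: "x0 < b" using x0(1) by simp
      obtain d where d: "d > 0" "\<forall>h>0. h < d \<longrightarrow> f x0 > f (x0 + h)"
        using DERIV_neg_dec_right[OF deriv 3] by blast
      define h where "h = min (d/2) ((b - x0)/2)"
      have h: "0 < h" "h < d" "h < b - x0" using d(1) bx unfolding h_def by (simp_all add: min_def)
      have xin: "x0 + h \<in> {a..b}" using h x0(1) by auto
      have np: "\<forall>l\<in>L. 1 - l*(x0+h) \<noteq> 0"
      proof
        fix l assume l: "l \<in> L"
        have "0 \<le> 1 - l*b" using nonneg[of b l] l a_neg b_pos unfolding L_def by auto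
        then have "0 < 1 - l*(x0+h)" using interp_right[OF bx h(1) h(3)] pos l by blast
        then show "1 - l*(x0+h) \<noteq> 0" by simp
      qed
      have "f (x0 + h) < m" using d(2) h m_def by blast
      moreover have "m \<le> f (x0 + h)" using fmin[OF xin np] .
      ultimately show False by simp
    qed
    have wmax: "wt lmax = 0"
    proof (rule ccontr)
      assume "wt lmax \<noteq> 0"
      then have "lmax \<in> L" using lmax_in L_def by simp
      moreover have "1 - lmax * x0 = 0" using \<open>x0 = b\<close> lmax_pos by (simp add: b_def)
      ultimately show False using nopole by blast
    qed
    show ?thesis
    proof (rule ext[OF lmax_in wmax])
      show "lmax * x0 = 1" using \<open>x0 = b\<close> lmax_pos by (simp add: b_def)
      show "F / lmax \<le> 0" using 3 lmax_pos by (simp add: divide_neg_pos less_imp_le)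
    qed
  qed
qed

end
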